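(* Let $\mathcal O\subset\mathbb R^2$ be a connected open set and let $\mathcal M=(\mathcal O,\Gamma)$ be an affine surface. Suppose there exist pairwise distinct real linear functions $L_1,L_2,L_3$ such that $\{e^{L_1},e^{L_2},e^{L_3}\}$ is a basis of $\mathcal Q(\mathcal M)$. Then $\Gamma$ has constant Christoffel symbols (i.e. is Type $\mathcal A$), and $\Gamma$ is linearly equivalent to one of: $\Gamma_r^2(a_1,a_2)$ for some $a_1,a_2$ with $a_1+a_2\neq1$ and $a_1a_2\neq0$; $\Gamma_2^1(c)$ for some $c\notin\{-1,0\}$; or $\Gamma_2^0$.
   Context: An affine manifold $(M,\nabla)$ is a smooth manifold $M$ of dimension $m\ge 2$ with a torsion-free connection $\nabla$ on $TM$; in local coordinates $\nabla_{\partial_{x^i}}\partial_{x^j}=\Gamma_{ij}^k\partial_{x^k}$ (summation over repeated indices). The curvature is $R(X,Y)Z=\nabla_X\nabla_YZ-\nabla_Y\nabla_XZ-\nabla_{[X,Y]}Z$, the Ricci tensor is $\rho(Y,Z)=\mathrm{Tr}(X\mapsto R(X,Y)Z)$, and $\rho_s(X,Y)=\frac12(\rho(X,Y)+\rho(Y,X))$. The Hessian is $\mathcal H_\nabla f=(\partial_{x^i}\partial_{x^j}f-\Gamma_{ij}^k\partial_{x^k}f)\,dx^i\otimes dx^j$. The quasi-Einstein solution space is $\mathcal Q(M,\nabla)=\{f\in C^\infty(M):\mathcal H_\nabla f+\frac{1}{m-1}f\rho_s=0\}$. For real constants, $\Gamma(a,b,c,d,e,f)$ denotes the connection on (an open subset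 of) $\mathbb R^2$ whose Christoffel symbols in the standard coordinates $(x^1,x^2)$ are the constants $\Gamma_{11}^1=a$, $\Gamma_{11}^2=b$, $\Gamma_{12}^1=\Gamma_{21}^1=c$, $\Gamma_{12}^2=\Gamma_{21}^2=d$, $\Gamma_{22}^1=e$, $\Gamma_{22}^2=f$; multiplying $\Gamma(\dots)$ by a scalar multiplies all six entries. Two connections with constant Christoffel symbols are linearly equivalent if they differ by a linear change of coordinates, i.e. there is $T\in GL(2,\mathbb R)$ with $T^*\nabla_2=\nabla_1$. A real linear function is $L(x^1,x^2)=\alpha_1x^1+\alpha_2x^2$, $\alpha_i\in\mathbb R$. The specific connections: for $a_1+a_2\ne1$, $\Gamma_r^2(a_1,a_2):=\frac{1}{a_1+a_2-1}\Gamma(a_1^2+a_2-1,\ a_1^2-a_1,\ a_1a_2,\ a_1a_2,\ a_2^2-a_2,\ a_1+a_2^2-1)$; for $c\ne-1$, $\Gamma_2^1(c):=\Gamma(-1,0,c,0,0,1+2c)$; $\Gamma_2^0:=\Gamma(-1,0,0,0,0,1)$. *)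

theory Defs
  imports "HOL-Analysis.Analysis"
begin

text \<open>Points of R^2 are pairs (x1,x2); coordinate indices are 0 (for x1) and 1 (for x2).
A connection on an open set U is given by its Christoffel symbols
G i j k p = Gamma_{ij}^k(p).\<close>

definition pd :: "nat \<Rightarrow> (real \<times> real \<Rightarrow> real) \<Rightarrow> real \<times> real \<Rightarrow> real" where
  "pd i f p = (if i = 0 then deriv (\<lambda>t. f (t, snd p)) (fst p)
               else deriv (\<lambda>t. f (fst p, t)) (snd p))"

fun Ck_on :: "nat \<Rightarrow> (real \<times> real) set \<Rightarrow> (real \<times> real \<Rightarrow> real) \<Rightarrow> bool" where
  "Ck_on 0 U f = continuous_on U f"
| "Ck_on (Suc k) U f = ((\<forall>p\<in>U. f differentiable (at p)) \<and> Ck_on k U (pd 0 f) \<and> Ck_on k U (pd 1 f))"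

definition smooth_on2 :: "(real \<times> real) set \<Rightarrow> (real \<times> real \<Rightarrow> real) \<Rightarrow> bool" where
  "smooth_on2 U f = (\<forall>k. Ck_on k U f)"

text \<open>Curvature components: R(d_i,d_j)d_k = curv G i j k l d_l.\<close>
definition curv :: "(nat \<Rightarrow> nat \<Rightarrow> nat \<Rightarrow> real \<times> real \<Rightarrow> real) \<Rightarrow> nat \<Rightarrow> nat \<Rightarrow> nat \<Rightarrow> nat \<Rightarrow> real \<times> real \<Rightarrow> real" where
  "curv G i j k l p = pd i (G j k l) p - pd j (G i k l) p
     + (\<Sum>n<2. G j k n p * G i n l p - G i k n p * G j n l p)"

definition ricci :: "(nat \<Rightarrow> nat \<Rightarrow> nat \<Rightarrow> real \<times> real \<Rightarrow> real) \<Rightarrow> nat \<Rightarrow> nat \<Rightarrow> real \<times> real \<Rightarrow> real" where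
  "ricci G j k p = (\<Sum>i<2. curv G i j k i p)"

definition ricci_s :: "(nat \<Rightarrow> nat \<Rightarrow> nat \<Rightarrow> real \<times> real \<Rightarrow> real) \<Rightarrow> nat \<Rightarrow> nat \<Rightarrow> real \<times> real \<Rightarrow> real" where
  "ricci_s G j k p = (ricci G j k p + ricci G k j p) / 2"

definition hessian :: "(nat \<Rightarrow> nat \<Rightarrow> nat \<Rightarrow> real \<times> real \<Rightarrow> real) \<Rightarrow> (real \<times> real \<Rightarrow> real) \<Rightarrow> nat \<Rightarrow> nat \<Rightarrow> real \<times> real \<Rightarrow> real" where
  "hessian G f i j p = pd i (pd j f) p - (\<Sum>k<2. G i j k p * pd k f p)"

text \<open>Quasi-Einstein solution space for a surface (m = 2, so 1/(m-1) = 1).\<close>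
definition QE :: "(real \<times> real) set \<Rightarrow> (nat \<Rightarrow> nat \<Rightarrow> nat \<Rightarrow> real \<times> real \<Rightarrow> real) \<Rightarrow> (real \<times> real \<Rightarrow> real) set" where
  "QE U G = {f. smooth_on2 U f \<and>
     (\<forall>p\<in>U. \<forall>i<2. \<forall>j<2. hessian G f i j p + (1 / (2 - 1)) * f p * ricci_s G i j p = 0)}"

definition linf :: "real \<times> real \<Rightarrow> real \<times> real \<Rightarrow> real" where
  "linf u p = fst u * fst p + snd u * snd p"

definition Gam :: "real \<Rightarrow> real \<Rightarrow> real \<Rightarrow> real \<Rightarrow> real \<Rightarrow> real \<Rightarrow> nat \<Rightarrow> nat \<Rightarrow> nat \<Rightarrow> real" where
  "Gam a b c d e f i j k =
     (if i = 0 \<and> j = 0 then (if k = 0 then a else b)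
      else if i = 1 \<and> j = 1 then (if k = 0 then e else f)
      else (if k = 0 then c else d))"

definition Gamma_r2 :: "real \<Rightarrow> real \<Rightarrow> nat \<Rightarrow> nat \<Rightarrow> nat \<Rightarrow> real" where
  "Gamma_r2 a1 a2 i j k = (1 / (a1 + a2 - 1)) *
     Gam (a1^2 + a2 - 1) (a1^2 - a1) (a1 * a2) (a1 * a2) (a2^2 - a2) (a1 + a2^2 - 1) i j k"

definition Gamma_21 :: "real \<Rightarrow> nat \<Rightarrow> nat \<Rightarrow> nat \<Rightarrow> real" where
  "Gamma_21 c = Gam (-1) 0 c 0 0 (1 + 2 * c)"

definition Gamma_20 :: "nat \<Rightarrow> nat \<Rightarrow> nat \<Rightarrow> real" where
  "Gamma_20 = Gam (-1) 0 0 0 0 1"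

text \<open>Linear equivalence of constant connections: there is T in GL(2,R) (T k c = T^k_c,
coordinate change x^k = T^k_c y^c) with T^* nabla2 = nabla1, i.e.
sum_c C1_{ab}^c T^k_c = sum_{i,j} C2_{ij}^k T^i_a T^j_b.\<close>
definition lin_equiv :: "(nat \<Rightarrow> nat \<Rightarrow> nat \<Rightarrow> real) \<Rightarrow> (nat \<Rightarrow> nat \<Rightarrow> nat \<Rightarrow> real) \<Rightarrow> bool" where
  "lin_equiv C1 C2 = (\<exists>T :: nat \<Rightarrow> nat \<Rightarrow> real.
     T 0 0 * T 1 1 - T 0 1 * T 1 0 \<noteq> 0 \<and>
     (\<forall>a<2. \<forall>b<2. \<forall>k<2.
        (\<Sum>c<2. C1 a b c * T k c) = (\<Sum>i<2. \<Sum>j<2. C2 i j k * T i a * T j b)))"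

end

theory Submission
  imports Defs
begin


definition cmp :: "real \<times> real \<Rightarrow> nat \<Rightarrow> real" where
  "cmp v i = (if i = 0 then fst v else snd v)"

lemma pd_exp:
  assumes "i < 2"
  shows "pd i (\<lambda>p. c * exp (linf u p)) = (\<lambda>p. c * cmp u i * exp (linf u p))"
proof
  fix p :: "real \<times> real"
  show "pd i (\<lambda>p. c * exp (linf u p)) p = c * cmp u i * exp (linf u p)"
  proof (cases "i = 0")
    case True
    have "((\<lambda>t. c * exp (fst u * t + snd u * snd p)) has_real_derivative
           c * (exp (fst u * fst p + snd u * snd p) * fst u)) (at (fst p))"
      by (auto intro!: derivative_eq_intros)
    then have "deriv (\<lambda>t. c * exp (fst u * t + snd u * snd p)) (fst p) = c * (exp (fst u * fst p + snd u * snd p) * fst u)"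
      by (rule DERIV_imp_deriv)
    then show ?thesis using True by (simp add: pd_def linf_def cmp_def)
  next
    case False
    have "((\<lambda>t. c * exp (fst u * fst p + snd u * t)) has_real_derivative
           c * (exp (fst u * fst p + snd u * snd p) * snd u)) (at (snd p))"
      by (auto intro!: derivative_eq_intros)
    then have "deriv (\<lambda>t. c * exp (fst u * fst p + snd u * t)) (snd p) = c * (exp (fst u * fst p + snd u * snd p) * snd u)"
      by (rule DERIV_imp_deriv)
    then show ?thesis using False by (simp add: pd_def linf_def cmp_def)
  qed
qed

lemma sum2: "(\<Sum>k<(2::nat). f k) = (f 0 + f 1 :: real)" by (simp add: numeral_2_eq_2)

definition interp :: "(nat \<Rightarrow> nat \<Rightarrow> nat \<Rightarrow> real) \<Rightarrow> (nat \<Rightarrow> nat \<Rightarrow> real) \<Rightarrow> real \<times> real \<Rightarrow> bool" where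
  "interp C r v = (\<forall>a<2. \<forall>b<2. cmp v a * cmp v b = (\<Sum>c<2. C a b c * cmp v c) - r a b)"

definition det3 :: "real \<times> real \<Rightarrow> real \<times> real \<Rightarrow> real \<times> real \<Rightarrow> real" where
  "det3 v1 v2 v3 = fst v1*(snd v2 - snd v3) + fst v2*(snd v3 - snd v1) + fst v3*(snd v1 - snd v2)"

lemma uniq:
  assumes "det3 v1 v2 v3 \<noteq> 0"
    and "fst v1 * b0 + snd v1 * b1 + g = 0"
    and "fst v2 * b0 + snd v2 * b1 + g = 0"
    and "fst v3 * b0 + snd v3 * b1 + g = 0"
  shows "b0 = 0 \<and> b1 = 0"
proof -
  have "b0 * det3 v1 v2 v3 = (snd v2 - snd v3)*(fst v1 * b0 + snd v1 * b1 + g)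
     + (snd v3 - snd v1)*(fst v2 * b0 + snd v2 * b1 + g) + (snd v1 - snd v2)*(fst v3 * b0 + snd v3 * b1 + g)"
    by (simp add: det3_def algebra_simps)
  then have 1: "b0 = 0" using assms by simp
  have "b1 * det3 v1 v2 v3 = (fst v3 - fst v2)*(fst v1 * b0 + snd v1 * b1 + g)
     + (fst v1 - fst v3)*(fst v2 * b0 + snd v2 * b1 + g) + (fst v2 - fst v1)*(fst v3 * b0 + snd v3 * b1 + g)"
    by (simp add: det3_def algebra_simps)
  then have "b1 = 0" using assms by simp
  with 1 show ?thesis by simp
qed

lemma collinear_False:
  fixes x1 y1 x2 y2 x3 y3 :: real
  assumes "(x1,y1) \<noteq> (x2,y2)" "(x1,y1) \<noteq> (x3,y3)" "(x2,y2) \<noteq> (x3,y3)"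
    and "x1*(y2 - y3) + x2*(y3 - y1) + x3*(y1 - y2) = 0"
    and "x1^2*(x3-x2) + x2^2*(x1-x3) + x3^2*(x2-x1) = 0"
    and "y1^2*(y2-y3) + y2^2*(y3-y1) + y3^2*(y1-y2) = 0"
  shows False
proof -
  have "x1^2*(x3-x2) + x2^2*(x1-x3) + x3^2*(x2-x1) = (x1-x2)*(x2-x3)*(x3-x1)" by algebra
  then have hx: "x1 = x2 \<or> x2 = x3 \<or> x3 = x1" using assms(5) by simp
  have "y1^2*(y2-y3) + y2^2*(y3-y1) + y3^2*(y1-y2) = -((y1-y2)*(y2-y3)*(y3-y1))" by algebra
  then have hy: "y1 = y2 \<or> y2 = y3 \<or> y3 = y1" using assms(6) by simp
  show False
  proof -
    { assume a: "x1 = x2"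
      then have "y1 \<noteq> y2" using assms(1) by auto
      have "(x3 - x1) * (y1 - y2) = 0" using assms(4) a by (simp add: algebra_simps)
      then have "x3 = x1" using \<open>y1 \<noteq> y2\<close> by simp
      then have False using hy a assms(1-3) by auto }
    moreover
    { assume a: "x2 = x3"
      then have "y2 \<noteq> y3" using assms(3) by auto
      have "(x1 - x2) * (y2 - y3) = 0" using assms(4) a by (simp add: algebra_simps)
      then have "x1 = x2" using \<open>y2 \<noteq> y3\<close> by simp
      then have False using hy a assms(1-3) by auto }
    moreover
    { assume a: "x3 = x1"
      then have "y3 \<noteq> y1" using assms(2) by auto
      have "(x2 - x1) * (y3 - y1) = 0" using assms(4) a by (simp add: algebra_simps)
      then have "x2 = x1" using \<open>y3 \<noteq> y1\<close> by simp
      then have False using hy a assms(1-3) by auto }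
    ultimately show False using hx by blast
  qed
qed

definition act :: "(nat \<Rightarrow> nat \<Rightarrow> real) \<Rightarrow> real \<times> real \<Rightarrow> real \<times> real" where
  "act T v = (fst v * T 0 0 + snd v * T 1 0, fst v * T 0 1 + snd v * T 1 1)"

lemma interpD: "interp C r v \<Longrightarrow> a < 2 \<Longrightarrow> b < 2 \<Longrightarrow>
   cmp v a * cmp v b = C a b 0 * cmp v 0 + C a b 1 * cmp v 1 - r a b"
  unfolding interp_def by (simp add: sum2)

lemma point:
  assumes hM: "interp M r' v" and hC: "interp C r (act T v)" and ab: "a < 2" "b < 2"
  shows "fst v * ((\<Sum>c<2. C a b c * T 0 c) - (\<Sum>i<2. \<Sum>j<2. M i j 0 * T i a * T j b))
       + snd v * ((\<Sum>c<2. C a b c * T 1 c) - (\<Sum>i<2. \<Sum>j<2. M i j 1 * T i a * T j b))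
       + ((\<Sum>i<2. \<Sum>j<2. r' i j * T i a * T j b) - r a b) = 0"
proof -
  have M00: "fst v * fst v = M 0 0 0 * fst v + M 0 0 1 * snd v - r' 0 0"
   and M01: "fst v * snd v = M 0 1 0 * fst v + M 0 1 1 * snd v - r' 0 1"
   and M10: "snd v * fst v = M 1 0 0 * fst v + M 1 0 1 * snd v - r' 1 0"
   and M11: "snd v * snd v = M 1 1 0 * fst v + M 1 1 1 * snd v - r' 1 1"
    using interpD[OF hM, of 0 0] interpD[OF hM, of 0 1] interpD[OF hM, of 1 0] interpD[OF hM, of 1 1]
    by (simp_all add: cmp_def)
  have Cab: "cmp (act T v) a * cmp (act T v) b = C a b 0 * fst (act T v) + C a b 1 * snd (act T v) - r a b"
    using interpD[OF hC ab] by (simp add: cmp_def)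
  have ca: "cmp (act T v) a = fst v * T 0 a + snd v * T 1 a" using ab(1)
    by (cases "a = 0") (auto simp: act_def cmp_def less_2_cases_iff)
  have cb: "cmp (act T v) b = fst v * T 0 b + snd v * T 1 b" using ab(2)
    by (cases "b = 0") (auto simp: act_def cmp_def less_2_cases_iff)
  have e: "(fst v * T 0 a + snd v * T 1 a) * (fst v * T 0 b + snd v * T 1 b)
     = C a b 0 * (fst v * T 0 0 + snd v * T 1 0) + C a b 1 * (fst v * T 0 1 + snd v * T 1 1) - r a b"
    using Cab ca cb by (simp add: act_def)
  have "(fst v * T 0 a + snd v * T 1 a) * (fst v * T 0 b + snd v * T 1 b)
     = (fst v * fst v) * T 0 a * T 0 b + (fst v * snd v) * T 0 a * T 1 b
       + (snd v * fst v) * T 1 a * T 0 b + (snd v * snd v) * T 1 a * T 1 b"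
    by (simp add: algebra_simps)
  also have "\<dots> = (M 0 0 0 * fst v + M 0 0 1 * snd v - r' 0 0) * T 0 a * T 0 b
       + (M 0 1 0 * fst v + M 0 1 1 * snd v - r' 0 1) * T 0 a * T 1 b
       + (M 1 0 0 * fst v + M 1 0 1 * snd v - r' 1 0) * T 1 a * T 0 b
       + (M 1 1 0 * fst v + M 1 1 1 * snd v - r' 1 1) * T 1 a * T 1 b"
    by (simp only: M00 M01 M10 M11)
  finally have e2: "C a b 0 * (fst v * T 0 0 + snd v * T 1 0) + C a b 1 * (fst v * T 0 1 + snd v * T 1 1) - r a b
     = (M 0 0 0 * fst v + M 0 0 1 * snd v - r' 0 0) * T 0 a * T 0 b
       + (M 0 1 0 * fst v + M 0 1 1 * snd v - r' 0 1) * T 0 a * T 1 b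
       + (M 1 0 0 * fst v + M 1 0 1 * snd v - r' 1 0) * T 1 a * T 0 b
       + (M 1 1 0 * fst v + M 1 1 1 * snd v - r' 1 1) * T 1 a * T 1 b"
    using e by simp
  show ?thesis using e2 by (simp add: sum2 algebra_simps)
qed

lemma equiv:
  assumes "det3 a1 a2 a3 \<noteq> 0" "T 0 0 * T 1 1 - T 0 1 * T 1 0 \<noteq> 0"
    "interp M r' a1" "interp M r' a2" "interp M r' a3"
    "interp C r (act T a1)" "interp C r (act T a2)" "interp C r (act T a3)"
  shows "lin_equiv C M"
  unfolding lin_equiv_def
proof (intro exI[of _ T] conjI allI impI)
  show "T 0 0 * T 1 1 - T 0 1 * T 1 0 \<noteq> 0" by fact
  fix a b k :: nat assume ab: "a < 2" "b < 2" and k: "k < 2"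
  have "((\<Sum>c<2. C a b c * T 0 c) - (\<Sum>i<2. \<Sum>j<2. M i j 0 * T i a * T j b)) = 0 \<and>
        ((\<Sum>c<2. C a b c * T 1 c) - (\<Sum>i<2. \<Sum>j<2. M i j 1 * T i a * T j b)) = 0"
    by (rule uniq[OF assms(1) point[OF assms(3,6) ab] point[OF assms(4,7) ab] point[OF assms(5,8) ab]])
  then show "(\<Sum>c<2. C a b c * T k c) = (\<Sum>i<2. \<Sum>j<2. M i j k * T i a * T j b)"
    using k by (cases "k = 0") (auto simp: numeral_2_eq_2 less_Suc_eq)
qed

lemma interpI:
  assumes "fst v * fst v = M 0 0 0 * fst v + M 0 0 1 * snd v - r 0 0"
   and "fst v * snd v = M 0 1 0 * fst v + M 0 1 1 * snd v - r 0 1"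
   and "snd v * fst v = M 1 0 0 * fst v + M 1 0 1 * snd v - r 1 0"
   and "snd v * snd v = M 1 1 0 * fst v + M 1 1 1 * snd v - r 1 1"
  shows "interp M r v"
  unfolding interp_def
proof (intro allI impI)
  fix a b :: nat assume "a < 2" "b < 2"
  then have "a = 0 \<or> a = 1" "b = 0 \<or> b = 1" by auto
  then show "cmp v a * cmp v b = (\<Sum>c<2. M a b c * cmp v c) - r a b"
    using assms by (auto simp: sum2 cmp_def)
qed

lemma caseA:
  assumes "v1 = (0,0)" "det3 v1 v2 v3 \<noteq> 0"
    "interp C r v1" "interp C r v2" "interp C r v3"
  shows "lin_equiv C Gamma_20"
proof -
  define T where "T = (\<lambda>k c. if k = (0::nat) then - cmp v2 c else cmp v3 c)"
  have a1: "act T (0,0) = v1" using assms(1) by (simp add: act_def T_def cmp_def)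
  have a2: "act T (-1,0) = v2" by (simp add: act_def T_def cmp_def)
  have a3: "act T (0,1) = v3" by (simp add: act_def T_def cmp_def)
  have dT: "T 0 0 * T 1 1 - T 0 1 * T 1 0 \<noteq> 0"
    using assms(1,2) by (simp add: T_def cmp_def det3_def algebra_simps)
  have da: "det3 (0,0) (-1,0) (0,1) \<noteq> 0" by (simp add: det3_def)
  have i1: "interp Gamma_20 (\<lambda>i j. 0) (0,0)" by (rule interpI) (simp_all add: Gamma_20_def Gam_def)
  have i2: "interp Gamma_20 (\<lambda>i j. 0) (-1,0)" by (rule interpI) (simp_all add: Gamma_20_def Gam_def)
  have i3: "interp Gamma_20 (\<lambda>i j. 0) (0,1)" by (rule interpI) (simp_all add: Gamma_20_def Gam_def)
  have j1: "interp C r (act T (0,0))" using a1 assms by simp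
  have j2: "interp C r (act T (-1,0))" using a2 assms by simp
  have j3: "interp C r (act T (0,1))" using a3 assms by simp
  show ?thesis by (rule equiv[OF da dT i1 i2 i3 j1 j2 j3])
qed

lemma caseB:
  assumes "v1 \<noteq> (0,0)" "v2 \<noteq> (0,0)" "fst v1 * snd v2 - snd v1 * fst v2 = 0" "det3 v1 v2 v3 \<noteq> 0"
    "interp C r v1" "interp C r v2" "interp C r v3"
  shows "\<exists>c. c \<noteq> -1 \<and> c \<noteq> 0 \<and> lin_equiv C (Gamma_21 c)"
proof -
  define w1 where "w1 = fst v2 - fst v1"
  define w2 where "w2 = snd v2 - snd v1"
  have wn: "w1^2 + w2^2 \<noteq> 0"
  proof
    assume "w1^2 + w2^2 = 0"
    then have "w1 = 0" "w2 = 0" by (auto simp: sum_power2_eq_zero_iff)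
    then show False using assms(4) by (simp add: w1_def w2_def det3_def algebra_simps)
  qed
  define c where "c = (fst v1 * w1 + snd v1 * w2) / (w1^2 + w2^2)"
  have dw: "fst v1 * w2 - snd v1 * w1 = 0" using assms(3) by (simp add: w1_def w2_def algebra_simps)
  have c1: "fst v1 = c * w1"
  proof -
    have "fst v1 * (w1^2 + w2^2) = (fst v1 * w1 + snd v1 * w2) * w1"
      using dw by (simp add: power2_eq_square algebra_simps)
    then show ?thesis using wn by (simp add: c_def field_simps)
  qed
  have c2: "snd v1 = c * w2"
  proof -
    have "snd v1 * (w1^2 + w2^2) = (fst v1 * w1 + snd v1 * w2) * w2"
      using dw by (simp add: power2_eq_square algebra_simps)
    then show ?thesis using wn by (simp add: c_def field_simps)
  qed
  define T where "T = (\<lambda>k i. if k = (0::nat) then cmp v1 i - cmp v3 i else (if i = 0 then w1 else w2))"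
  have a1: "act T (0,c) = v1" using c1 c2 by (simp add: act_def T_def cmp_def prod_eq_iff)
  have a2: "act T (0,c+1) = v2" using c1 c2 by (simp add: act_def T_def cmp_def prod_eq_iff w1_def w2_def algebra_simps)
  have a3: "act T (-1,c) = v3" using c1 c2 by (simp add: act_def T_def cmp_def prod_eq_iff)
  have dT: "T 0 0 * T 1 1 - T 0 1 * T 1 0 \<noteq> 0"
  proof -
    have "T 0 0 * T 1 1 - T 0 1 * T 1 0 = det3 v1 v2 v3"
      by (simp add: T_def cmp_def det3_def w1_def w2_def algebra_simps)
    then show ?thesis using assms(4) by simp
  qed
  have cn0: "c \<noteq> 0" using c1 c2 assms(1) by (auto simp: prod_eq_iff)
  have cn1: "c \<noteq> -1"
  proof
    assume "c = -1"
    then have "fst v2 = 0" "snd v2 = 0" using c1 c2 by (auto simp: w1_def w2_def)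
    then show False using assms(2) by (simp add: prod_eq_iff)
  qed
  define r' where "r' = (\<lambda>i j. if i = (1::nat) \<and> j = (1::nat) then c^2 + c else 0)"
  have da: "det3 (0,c) (0,c+1) (-1,c) \<noteq> 0" by (simp add: det3_def)
  have i1: "interp (Gamma_21 c) r' (0,c)" by (rule interpI) (simp_all add: r'_def Gamma_21_def Gam_def power2_eq_square algebra_simps)
  have i2: "interp (Gamma_21 c) r' (0,c+1)" by (rule interpI) (simp_all add: r'_def Gamma_21_def Gam_def power2_eq_square algebra_simps)
  have i3: "interp (Gamma_21 c) r' (-1,c)" by (rule interpI) (simp_all add: r'_def Gamma_21_def Gam_def power2_eq_square algebra_simps)
  have j1: "interp C r (act T (0,c))" using a1 assms by simp
  have j2: "interp C r (act T (0,c+1))" using a2 assms by simp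
  have j3: "interp C r (act T (-1,c))" using a3 assms by simp
  have "lin_equiv C (Gamma_21 c)" by (rule equiv[OF da dT i1 i2 i3 j1 j2 j3])
  then show ?thesis using cn0 cn1 by blast
qed

lemma dv: "e \<noteq> 0 \<Longrightarrow> A*x + B*y - R = L*(e::real) \<Longrightarrow> L = A/e*x + B/e*y - R/e"
  by (simp add: field_simps)

lemma caseC:
  assumes "fst v1 * snd v2 - snd v1 * fst v2 \<noteq> 0"
    "fst v1 * snd v3 - snd v1 * fst v3 \<noteq> 0"
    "fst v2 * snd v3 - snd v2 * fst v3 \<noteq> 0" "det3 v1 v2 v3 \<noteq> 0"
    "interp C r v1" "interp C r v2" "interp C r v3"
  shows "\<exists>a1 a2. a1 + a2 \<noteq> 1 \<and> a1 * a2 \<noteq> 0 \<and> lin_equiv C (Gamma_r2 a1 a2)"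
proof -
  define d where "d = fst v1 * snd v2 - snd v1 * fst v2"
  define a1 where "a1 = (fst v3 * snd v2 - snd v3 * fst v2) / d"
  define a2 where "a2 = (fst v1 * snd v3 - snd v1 * fst v3) / d"
  have dn: "d \<noteq> 0" using assms(1) by (simp add: d_def)
  have m1: "a1 * d = fst v3 * snd v2 - snd v3 * fst v2" using dn by (simp add: a1_def)
  have m2: "a2 * d = fst v1 * snd v3 - snd v1 * fst v3" using dn by (simp add: a2_def)
  have "(a1 + a2 - 1) * d = a1 * d + a2 * d - d" by (simp add: algebra_simps)
  also have "\<dots> = - det3 v1 v2 v3" unfolding m1 m2 by (simp add: d_def det3_def algebra_simps)
  finally have s1: "(a1 + a2 - 1) * d = - det3 v1 v2 v3" .
  have sn: "a1 + a2 \<noteq> 1" using s1 dn assms(4) by auto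
  have sn': "a1 + a2 - 1 \<noteq> 0" using sn by simp
  have pn: "a1 * a2 \<noteq> 0"
  proof
    assume "a1 * a2 = 0"
    then have "a1 * d = 0 \<or> a2 * d = 0" by auto
    then show False using m1 m2 assms(2,3) by (auto simp: algebra_simps)
  qed
  define T where "T = (\<lambda>k i. if k = (0::nat) then cmp v1 i else cmp v2 i)"
  have e1: "act T (1,0) = v1" by (simp add: act_def T_def cmp_def)
  have e2: "act T (0,1) = v2" by (simp add: act_def T_def cmp_def)
  have e3: "act T (a1,a2) = v3"
  proof -
    have "(a1 * fst v1 + a2 * fst v2) * d = (a1 * d) * fst v1 + (a2 * d) * fst v2" by (simp add: algebra_simps)
    also have "\<dots> = fst v3 * d" unfolding m1 m2 by (simp add: d_def algebra_simps)
    finally have x: "(a1 * fst v1 + a2 * fst v2) * d = fst v3 * d" .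
    have "(a1 * snd v1 + a2 * snd v2) * d = (a1 * d) * snd v1 + (a2 * d) * snd v2" by (simp add: algebra_simps)
    also have "\<dots> = snd v3 * d" unfolding m1 m2 by (simp add: d_def algebra_simps)
    finally have y: "(a1 * snd v1 + a2 * snd v2) * d = snd v3 * d" .
    show ?thesis using x y dn by (simp add: act_def T_def cmp_def prod_eq_iff)
  qed
  have dT: "T 0 0 * T 1 1 - T 0 1 * T 1 0 \<noteq> 0" using dn by (simp add: T_def cmp_def d_def)
  define r' where "r' = (\<lambda>(i::nat) (j::nat). if i = 0 \<and> j = 0 then (a1^2 - a1) / (a1 + a2 - 1)
      else if i = 1 \<and> j = 1 then (a2^2 - a2) / (a1 + a2 - 1) else a1 * a2 / (a1 + a2 - 1))"
  have sq: "1 + (a1 * a1 + (a2 * a2 + a1 * (a2 * 2))) \<noteq> a1 * 2 + a2 * 2"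
  proof -
    have "(a1 + a2 - 1) * (a1 + a2 - 1) \<noteq> 0" using sn' by simp
    then show ?thesis by (simp add: algebra_simps)
  qed
  have i1: "interp (Gamma_r2 a1 a2) r' (1,0)"
    apply (rule interpI) using sn' sq by (simp_all add: r'_def Gamma_r2_def Gam_def field_simps)
  have i2: "interp (Gamma_r2 a1 a2) r' (0,1)"
    apply (rule interpI) using sn' sq by (simp_all add: r'_def Gamma_r2_def Gam_def field_simps)
  have f1: "a1*a1 = (a1^2+a2-1)/(a1+a2-1) * a1 + (a1^2-a1)/(a1+a2-1) * a2 - (a1^2-a1)/(a1+a2-1)"
    by (rule dv[OF sn']) (simp add: power2_eq_square algebra_simps)
  have f2: "a1*a2 = (a1*a2)/(a1+a2-1) * a1 + (a1*a2)/(a1+a2-1) * a2 - (a1*a2)/(a1+a2-1)"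
    by (rule dv[OF sn']) (simp add: power2_eq_square algebra_simps)
  have f3: "a2*a2 = (a2^2-a2)/(a1+a2-1) * a1 + (a1+a2^2-1)/(a1+a2-1) * a2 - (a2^2-a2)/(a1+a2-1)"
    by (rule dv[OF sn']) (simp add: power2_eq_square algebra_simps)
  have i3: "interp (Gamma_r2 a1 a2) r' (a1,a2)"
  proof (rule interpI)
    show "fst (a1,a2) * fst (a1,a2) = Gamma_r2 a1 a2 0 0 0 * fst (a1,a2) + Gamma_r2 a1 a2 0 0 1 * snd (a1,a2) - r' 0 0"
      using f1 by (simp add: Gamma_r2_def Gam_def r'_def)
    show "fst (a1,a2) * snd (a1,a2) = Gamma_r2 a1 a2 0 1 0 * fst (a1,a2) + Gamma_r2 a1 a2 0 1 1 * snd (a1,a2) - r' 0 1"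
      using f2 by (simp add: Gamma_r2_def Gam_def r'_def)
    show "snd (a1,a2) * fst (a1,a2) = Gamma_r2 a1 a2 1 0 0 * fst (a1,a2) + Gamma_r2 a1 a2 1 0 1 * snd (a1,a2) - r' 1 0"
      using f2 by (simp add: Gamma_r2_def Gam_def r'_def mult.commute)
    show "snd (a1,a2) * snd (a1,a2) = Gamma_r2 a1 a2 1 1 0 * fst (a1,a2) + Gamma_r2 a1 a2 1 1 1 * snd (a1,a2) - r' 1 1"
      using f3 by (simp add: Gamma_r2_def Gam_def r'_def)
  qed
  have da: "det3 (1,0) (0,1) (a1,a2) \<noteq> 0" using sn by (simp add: det3_def)
  have j1: "interp C r (act T (1,0))" using e1 assms by simp
  have j2: "interp C r (act T (0,1))" using e2 assms by simp
  have j3: "interp C r (act T (a1,a2))" using e3 assms by simp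
  have "lin_equiv C (Gamma_r2 a1 a2)" by (rule equiv[OF da dT i1 i2 i3 j1 j2 j3])
  then show ?thesis using sn pn by blast
qed



lemma det_nonzero:
  assumes "interp C r v1" "interp C r v2" "interp C r v3"
    "v1 \<noteq> v2" "v1 \<noteq> v3" "v2 \<noteq> v3"
  shows "det3 v1 v2 v3 \<noteq> 0"
proof
  assume D: "det3 v1 v2 v3 = 0"
  have x1: "fst v1 * fst v1 = C 0 0 0 * fst v1 + C 0 0 1 * snd v1 - r 0 0"
    using interpD[OF assms(1), of 0 0] by (simp add: cmp_def)
  have x2: "fst v2 * fst v2 = C 0 0 0 * fst v2 + C 0 0 1 * snd v2 - r 0 0"
    using interpD[OF assms(2), of 0 0] by (simp add: cmp_def)
  have x3: "fst v3 * fst v3 = C 0 0 0 * fst v3 + C 0 0 1 * snd v3 - r 0 0"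
    using interpD[OF assms(3), of 0 0] by (simp add: cmp_def)
  have y1: "snd v1 * snd v1 = C 1 1 0 * fst v1 + C 1 1 1 * snd v1 - r 1 1"
    using interpD[OF assms(1), of 1 1] by (simp add: cmp_def)
  have y2: "snd v2 * snd v2 = C 1 1 0 * fst v2 + C 1 1 1 * snd v2 - r 1 1"
    using interpD[OF assms(2), of 1 1] by (simp add: cmp_def)
  have y3: "snd v3 * snd v3 = C 1 1 0 * fst v3 + C 1 1 1 * snd v3 - r 1 1"
    using interpD[OF assms(3), of 1 1] by (simp add: cmp_def)
  have ex: "(fst v1)^2*(fst v3-fst v2) + (fst v2)^2*(fst v1-fst v3) + (fst v3)^2*(fst v2-fst v1)
     = C 0 0 1 * det3 v1 v2 v3"
    unfolding power2_eq_square x1 x2 x3 by (simp add: det3_def algebra_simps)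
  have ey: "(snd v1)^2*(snd v2-snd v3) + (snd v2)^2*(snd v3-snd v1) + (snd v3)^2*(snd v1-snd v2)
     = C 1 1 0 * det3 v1 v2 v3"
    unfolding power2_eq_square y1 y2 y3 by (simp add: det3_def algebra_simps)
  have d1: "(fst v1, snd v1) \<noteq> (fst v2, snd v2)" using assms(4) by simp
  have d2: "(fst v1, snd v1) \<noteq> (fst v3, snd v3)" using assms(5) by simp
  have d3: "(fst v2, snd v2) \<noteq> (fst v3, snd v3)" using assms(6) by simp
  have D': "fst v1*(snd v2 - snd v3) + fst v2*(snd v3 - snd v1) + fst v3*(snd v1 - snd v2) = 0"
    using D by (simp add: det3_def)
  show False
    by (rule collinear_False[OF d1 d2 d3 D']) (simp_all only: ex ey D mult_zero_right)
qed

lemma det3_perm: "det3 v2 v1 v3 = - det3 v1 v2 v3" "det3 v1 v3 v2 = - det3 v1 v2 v3"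
   "det3 v3 v1 v2 = det3 v1 v2 v3" "det3 v2 v3 v1 = det3 v1 v2 v3"
  by (simp_all add: det3_def algebra_simps)

lemma classify:
  assumes "interp C r v1" "interp C r v2" "interp C r v3" "det3 v1 v2 v3 \<noteq> 0"
  shows "(\<exists>a1 a2. a1 + a2 \<noteq> 1 \<and> a1 * a2 \<noteq> 0 \<and> lin_equiv C (Gamma_r2 a1 a2)) \<or>
            (\<exists>c. c \<noteq> -1 \<and> c \<noteq> 0 \<and> lin_equiv C (Gamma_21 c)) \<or>
            lin_equiv C Gamma_20"
proof -
  have p1: "det3 v2 v1 v3 \<noteq> 0" "det3 v1 v3 v2 \<noteq> 0" "det3 v3 v1 v2 \<noteq> 0" "det3 v2 v3 v1 \<noteq> 0"
    using assms(4) unfolding det3_def by (simp_all add: algebra_simps)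
  show ?thesis
  proof (cases "v1 = (0,0) \<or> v2 = (0,0) \<or> v3 = (0,0)")
    case True
    then have "lin_equiv C Gamma_20"
    proof (elim disjE)
      assume "v1 = (0,0)" then show ?thesis by (rule caseA[OF _ assms(4) assms(1-3)])
    next
      assume "v2 = (0,0)" then show ?thesis by (rule caseA[OF _ p1(1) assms(2,1,3)])
    next
      assume "v3 = (0,0)" then show ?thesis by (rule caseA[OF _ p1(3) assms(3,1,2)])
    qed
    then show ?thesis by blast
  next
    case nz: False
    then have n1: "v1 \<noteq> (0,0)" and n2: "v2 \<noteq> (0,0)" and n3: "v3 \<noteq> (0,0)" by simp_all
    show ?thesis
    proof (cases "fst v1 * snd v2 - snd v1 * fst v2 = 0 \<or> fst v1 * snd v3 - snd v1 * fst v3 = 0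
                  \<or> fst v2 * snd v3 - snd v2 * fst v3 = 0")
      case True
      then have "\<exists>c. c \<noteq> -1 \<and> c \<noteq> 0 \<and> lin_equiv C (Gamma_21 c)"
      proof (elim disjE)
        assume h: "fst v1 * snd v2 - snd v1 * fst v2 = 0"
        show ?thesis by (rule caseB[OF n1 n2 h assms(4) assms(1-3)])
      next
        assume h: "fst v1 * snd v3 - snd v1 * fst v3 = 0"
        show ?thesis by (rule caseB[OF n1 n3 h p1(2) assms(1,3,2)])
      next
        assume h: "fst v2 * snd v3 - snd v2 * fst v3 = 0"
        show ?thesis by (rule caseB[OF n2 n3 h p1(4) assms(2,3,1)])
      qed
      then show ?thesis by blast
    next
      case False
      then have h1: "fst v1 * snd v2 - snd v1 * fst v2 \<noteq> 0" and h2: "fst v1 * snd v3 - snd v1 * fst v3 \<noteq> 0"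
        and h3: "fst v2 * snd v3 - snd v2 * fst v3 \<noteq> 0" by simp_all
      have "\<exists>a1 a2. a1 + a2 \<noteq> 1 \<and> a1 * a2 \<noteq> 0 \<and> lin_equiv C (Gamma_r2 a1 a2)"
        by (rule caseC[OF h1 h2 h3 assms(4) assms(1-3)])
      then show ?thesis by blast
    qed
  qed
qed

lemma qe_interp:
  assumes "(\<lambda>p. exp (linf u p)) \<in> QE U G" "p \<in> U"
  shows "interp (\<lambda>a b c. G a b c p) (\<lambda>a b. ricci_s G a b p) u"
  unfolding interp_def
proof (intro allI impI)
  fix a b :: nat assume ab: "a < 2" "b < 2"
  have H: "hessian G (\<lambda>p. exp (linf u p)) a b p + 1 / (2 - 1) * exp (linf u p) * ricci_s G a b p = 0"
    using assms ab by (simp add: QE_def)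
  have f: "(\<lambda>p. exp (linf u p)) = (\<lambda>p. 1 * exp (linf u p))" by simp
  have pk: "pd k (\<lambda>p. exp (linf u p)) = (\<lambda>p. 1 * cmp u k * exp (linf u p))" if "k < 2" for k
    by (subst f) (rule pd_exp[OF that])
  have pab: "pd a (pd b (\<lambda>p. exp (linf u p))) p = 1 * cmp u b * cmp u a * exp (linf u p)"
    unfolding pk[OF ab(2)] pd_exp[OF ab(1)] by simp
  have hs: "hessian G (\<lambda>p. exp (linf u p)) a b p = exp (linf u p) *
       (cmp u a * cmp u b - (G a b 0 p * cmp u 0 + G a b 1 p * cmp u 1))"
    unfolding hessian_def pab using pk[of 0] pk[of 1] by (simp add: sum2 algebra_simps)
  have "exp (linf u p) * (cmp u a * cmp u b - (G a b 0 p * cmp u 0 + G a b 1 p * cmp u 1) + ricci_s G a b p) = 0"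
    using H unfolding hs by (simp add: algebra_simps)
  then have "cmp u a * cmp u b - (G a b 0 p * cmp u 0 + G a b 1 p * cmp u 1) + ricci_s G a b p = 0"
    by simp
  moreover have "(\<Sum>c<2. G a b c p * cmp u c) = G a b 0 p * cmp u 0 + G a b 1 p * cmp u 1"
    by (simp add: sum2)
  ultimately show "cmp u a * cmp u b = (\<Sum>c<2. G a b c p * cmp u c) - ricci_s G a b p"
    by (simp add: algebra_simps)
qed


lemma diff_pt:
  assumes "interp C1 r1 v" "interp C2 r2 v" "i < 2" "j < 2"
  shows "fst v * (C1 i j 0 - C2 i j 0) + snd v * (C1 i j 1 - C2 i j 1) + (r2 i j - r1 i j) = 0"
  using interpD[OF assms(1) assms(3,4)] interpD[OF assms(2) assms(3,4)]
  by (simp add: cmp_def algebra_simps)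

theorem theorem2p5:
  fixes U :: "(real \<times> real) set"
    and G :: "nat \<Rightarrow> nat \<Rightarrow> nat \<Rightarrow> real \<times> real \<Rightarrow> real"
    and u1 u2 u3 :: "real \<times> real"
  assumes "open U" and "connected U"
    and "\<forall>i<2. \<forall>j<2. \<forall>k<2. smooth_on2 U (G i j k)"
    and "\<forall>i<2. \<forall>j<2. \<forall>k<2. \<forall>p\<in>U. G i j k p = G j i k p"
    and "u1 \<noteq> u2" and "u1 \<noteq> u3" and "u2 \<noteq> u3"
    and "(\<lambda>p. exp (linf u1 p)) \<in> QE U G"
    and "(\<lambda>p. exp (linf u2 p)) \<in> QE U G"
    and "(\<lambda>p. exp (linf u3 p)) \<in> QE U G"
    and "\<forall>c1 c2 c3 :: real. (\<forall>p\<in>U. c1 * exp (linf u1 p) + c2 * exp (linf u2 p) + c3 * exp (linf u3 p) = 0)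
           \<longrightarrow> c1 = 0 \<and> c2 = 0 \<and> c3 = 0"
    and "\<forall>f\<in>QE U G. \<exists>c1 c2 c3 :: real. \<forall>p\<in>U.
           f p = c1 * exp (linf u1 p) + c2 * exp (linf u2 p) + c3 * exp (linf u3 p)"
  shows "\<exists>C :: nat \<Rightarrow> nat \<Rightarrow> nat \<Rightarrow> real.
           (\<forall>i<2. \<forall>j<2. \<forall>k<2. \<forall>p\<in>U. G i j k p = C i j k) \<and>
           ((\<exists>a1 a2. a1 + a2 \<noteq> 1 \<and> a1 * a2 \<noteq> 0 \<and> lin_equiv C (Gamma_r2 a1 a2)) \<or>
            (\<exists>c. c \<noteq> -1 \<and> c \<noteq> 0 \<and> lin_equiv C (Gamma_21 c)) \<or>
            lin_equiv C Gamma_20)"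
proof -
  have "U \<noteq> {}"
  proof
    assume "U = {}"
    then show False using assms(11)[rule_format, of 1 0 0] by simp
  qed
  then obtain p0 where p0: "p0 \<in> U" by blast
  define C where "C = (\<lambda>a b c. G a b c p0)"
  define r0 where "r0 = (\<lambda>a b. ricci_s G a b p0)"
  have I1: "interp C r0 u1" unfolding C_def r0_def by (rule qe_interp[OF assms(8) p0])
  have I2: "interp C r0 u2" unfolding C_def r0_def by (rule qe_interp[OF assms(9) p0])
  have I3: "interp C r0 u3" unfolding C_def r0_def by (rule qe_interp[OF assms(10) p0])
  have D: "det3 u1 u2 u3 \<noteq> 0" by (rule det_nonzero[OF I1 I2 I3 assms(5-7)])
  have const: "\<forall>i<2. \<forall>j<2. \<forall>k<2. \<forall>p\<in>U. G i j k p = C i j k"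
  proof (intro allI impI ballI)
    fix i j k p assume ij: "i < (2::nat)" "j < (2::nat)" and k: "k < (2::nat)" and p: "p \<in> U"
    define Cp where "Cp = (\<lambda>a b c. G a b c p)"
    define rp where "rp = (\<lambda>a b. ricci_s G a b p)"
    have J1: "interp Cp rp u1" unfolding Cp_def rp_def by (rule qe_interp[OF assms(8) p])
    have J2: "interp Cp rp u2" unfolding Cp_def rp_def by (rule qe_interp[OF assms(9) p])
    have J3: "interp Cp rp u3" unfolding Cp_def rp_def by (rule qe_interp[OF assms(10) p])
    have "Cp i j 0 - C i j 0 = 0 \<and> Cp i j 1 - C i j 1 = 0"
      by (rule uniq[OF D diff_pt[OF J1 I1 ij] diff_pt[OF J2 I2 ij] diff_pt[OF J3 I3 ij]])
    then show "G i j k p = C i j k" using k by (auto simp: Cp_def less_2_cases_iff)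
  qed
  show ?thesis using const classify[OF I1 I2 I3 D] by blast
qed

end
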